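(* For any field $\mathbb{F}$ and integers $1\le k\le n$, the disjointness matrix satisfies $\mathcal{R}^{rc}_{R_n}\big(2\binom{n}{<k}\big)\le\binom{n-k}{\le n-2k}$ over $\mathbb{F}$.
   Context: $R_n\in\{0,1\}^{2^n\times 2^n}$, indexed by $x,y\in\{0,1\}^n$, has $R_n[x,y]=1$ iff no coordinate $\ell$ has $x[\ell]=y[\ell]=1$. Row/column rigidity: $\mathcal{R}^{rc}_A(r)=\min\{\max(\mathrm{nnz_r}(B),\mathrm{nnz_c}(B)) : \mathrm{rank}(A+B)\le r\}$, where $\mathrm{nnz_r}(B)$ (resp. $\mathrm{nnz_c}(B)$) is the maximum number of nonzero entries in a row (resp. column) of $B$. $\binom{n}{<k}=\sum_{i=0}^{k-1}\binom{n}{i}$, $\binom{m}{\le j}=\sum_{i=0}^{j}\binom{m}{i}$ (empty sum $=0$). *)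

theory Defs
  imports "Jordan_Normal_Form.DL_Rank"
begin

text \<open>Vectors x in {0,1}^n are encoded as natural numbers x < 2^n,
  with x[l] = bit x l for l < n.  The disjointness matrix R_n over a field 'a.\<close>
definition disj_mat :: "nat \<Rightarrow> 'a::field mat" where
  "disj_mat n = mat (2^n) (2^n)
     (\<lambda>(x, y). if \<not> (\<exists>l<n. bit x l \<and> bit y l) then 1 else 0)"

definition mrank :: "'a::field mat \<Rightarrow> nat" where
  "mrank A = vec_space.rank (dim_row A) A"

definition nnz_r :: "'a::zero mat \<Rightarrow> nat" where
  "nnz_r B = Max (insert 0 ((\<lambda>i. card {j. j < dim_col B \<and> B $$ (i, j) \<noteq> 0}) ` {..<dim_row B}))"

definition nnz_c :: "'a::zero mat \<Rightarrow> nat" where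
  "nnz_c B = Max (insert 0 ((\<lambda>j. card {i. i < dim_row B \<and> B $$ (i, j) \<noteq> 0}) ` {..<dim_col B}))"

definition rigidity_rc :: "'a::field mat \<Rightarrow> nat \<Rightarrow> nat" where
  "rigidity_rc A r = Inf {max (nnz_r B) (nnz_c B) | B.
      B \<in> carrier_mat (dim_row A) (dim_col A) \<and> mrank (A + B) \<le> r}"

definition binom_lt :: "nat \<Rightarrow> nat \<Rightarrow> nat" where
  "binom_lt n k = (\<Sum>i<k. n choose i)"

text \<open>binom(m,<=j) = sum_{i=0}^{j} C(m,i) for an integer j (empty sum = 0 if j<0)\<close>
definition binom_le :: "nat \<Rightarrow> int \<Rightarrow> nat" where
  "binom_le m j = (\<Sum>i\<in>{i::nat. int i \<le> j}. m choose i)"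

end

theory Submission
  imports Defs
begin

lemma card_subsets_J:
  assumes "finite C" "finite J"
  shows "card {S. S \<subseteq> C \<and> card S \<in> J} = (\<Sum>j\<in>J. card C choose j)"
proof -
  have eq: "{S. S \<subseteq> C \<and> card S \<in> J} = (\<Union>j\<in>J. {S. S \<subseteq> C \<and> card S = j})" by auto
  have "card (\<Union>j\<in>J. {S. S \<subseteq> C \<and> card S = j}) = (\<Sum>j\<in>J. card {S. S \<subseteq> C \<and> card S = j})"
    by (rule card_UN_disjoint) (use assms in \<open>auto intro: finite_subset[of _ "Pow C"]\<close>)
  then show ?thesis using eq n_subsets[OF assms(1)] by simp
qed

definition pc :: "nat \<Rightarrow> nat \<Rightarrow> nat" where "pc n x = card {l. l < n \<and> bit x l}"

lemma bits_inj: "inj_on (\<lambda>c::nat. {l. l < n \<and> bit c l}) {..<2^n}"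
proof (rule inj_onI)
  fix x y :: nat assume x: "x \<in> {..<2^n}" and y: "y \<in> {..<2^n}" and e: "{l. l < n \<and> bit x l} = {l. l < n \<and> bit y l}"
  have tx: "take_bit n x = x" and ty: "take_bit n y = y" using x y by (auto simp: take_bit_nat_eq_self_iff)
  show "x = y"
  proof (rule bit_eqI)
    fix l
    show "bit x l = bit y l"
    proof (cases "l < n")
      case True then show ?thesis using e by blast
    next
      case False then show ?thesis by (metis tx ty bit_take_bit_iff)
    qed
  qed
qed

lemma count_low:
  "card {x. x < 2^n \<and> pc n x < k} \<le> binom_lt n k"
proof -
  have "card {x. x < 2^n \<and> pc n x < k} \<le> card {S. S \<subseteq> {..<n} \<and> card S \<in> {..<k}}"
    apply (rule card_inj_on_le[where f="\<lambda>c::nat. {l. l < n \<and> bit c l}"])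
      apply (rule inj_on_subset[OF bits_inj]) apply auto[1]
     apply (auto simp: pc_def)[1]
    apply (rule finite_subset[of _ "Pow {..<n}"]) by auto
  also have "\<dots> = binom_lt n k" unfolding binom_lt_def by (subst card_subsets_J) auto
  finally show ?thesis .
qed

lemma sum_rev_eq:
  assumes "k \<le> n"
  shows "(\<Sum>j\<in>{k..n-k}. (n-k) choose j) = binom_le (n - k) (int n - 2 * int k)"
proof (cases "2*k \<le> n")
  case False
  then have "{i::nat. int i \<le> int n - 2 * int k} = {}" by auto
  moreover have "{k..n-k} = {}" using False by auto
  ultimately show ?thesis unfolding binom_le_def by simp
next
  case True
  then have s: "{i::nat. int i \<le> int n - 2 * int k} = {..n-2*k}" by auto
  have "(\<Sum>j\<in>{k..n-k}. (n-k) choose j) = (\<Sum>i\<in>{..n-2*k}. (n-k) choose i)"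
    apply (rule sum.reindex_bij_witness[where i="\<lambda>i. n-k-i" and j="\<lambda>j. n-k-j"])
    using True apply (auto simp: binomial_symmetric[symmetric])
    by (metis binomial_symmetric diff_diff_left)
  then show ?thesis unfolding binom_le_def s by simp
qed

lemma count_high:
  assumes "k \<le> pc n r" "k \<le> n"
  shows "card {c. c < 2^n \<and> k \<le> pc n c \<and> \<not> (\<exists>l<n. bit r l \<and> bit c l)} \<le> binom_le (n - k) (int n - 2 * int k)"
proof -
  define C where "C = {l. l < n \<and> \<not> bit r l}"
  have fC: "finite C" unfolding C_def by auto
  have "C = {..<n} - {l. l < n \<and> bit r l}" unfolding C_def by auto
  then have "card C = card ({..<n} - {l. l < n \<and> bit r l})" by simp
  also have "\<dots> = n - card {l. l < n \<and> bit r l}" by (subst card_Diff_subset) auto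
  finally have cC: "card C = n - pc n r" unfolding pc_def .
  have "card {c. c < 2^n \<and> k \<le> pc n c \<and> \<not> (\<exists>l<n. bit r l \<and> bit c l)} \<le> card {S. S \<subseteq> C \<and> card S \<in> {k..card C}}"
    apply (rule card_inj_on_le[where f="\<lambda>c::nat. {l. l < n \<and> bit c l}"])
      apply (rule inj_on_subset[OF bits_inj]) apply auto[1]
    subgoal
    proof (rule image_subsetI)
      fix c assume c: "c \<in> {c. c < 2^n \<and> k \<le> pc n c \<and> \<not> (\<exists>l<n. bit r l \<and> bit c l)}"
      have sub: "{l. l < n \<and> bit c l} \<subseteq> C" using c unfolding C_def by auto
      have "card {l. l < n \<and> bit c l} \<le> card C" by (rule card_mono[OF fC sub])
      then show "{l. l < n \<and> bit c l} \<in> {S. S \<subseteq> C \<and> card S \<in> {k..card C}}" using c sub by (auto simp: pc_def)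
    qed
    apply (rule finite_subset[of _ "Pow C"]) using fC by auto
  also have "\<dots> = (\<Sum>j\<in>{k..card C}. card C choose j)" by (rule card_subsets_J[OF fC]) auto
  also have "\<dots> \<le> (\<Sum>j\<in>{k..card C}. (n-k) choose j)"
    by (rule sum_mono, rule binomial_right_mono) (use cC assms in auto)
  also have "\<dots> \<le> (\<Sum>j\<in>{k..n-k}. (n-k) choose j)"
    by (rule sum_mono2) (use cC assms in auto)
  also have "\<dots> = binom_le (n - k) (int n - 2 * int k)" by (rule sum_rev_eq[OF assms(2)])
  finally show ?thesis .
qed

lemma rank_sum1:
  assumes "finite S"
  shows "vec_space.rank N (mat N M (\<lambda>(r,c). \<Sum>x\<in>S. f x r * g x c) :: 'a::field mat) \<le> card S"
  using assms
proof (induction S rule: finite_induct)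
  case empty
  have "(mat N M (\<lambda>(r,c). \<Sum>x\<in>{}. f x r * g x c) :: 'a mat) = 0\<^sub>m N M"
    by (rule eq_matI) auto
  then show ?case by (simp only: vec_space.rank_0I card.empty order_refl)
next
  case (insert x S)
  have e: "(mat N M (\<lambda>(r,c). \<Sum>x\<in>insert x S. f x r * g x c) :: 'a mat)
     = mat N M (\<lambda>(r,c). f x r * g x c) + mat N M (\<lambda>(r,c). \<Sum>x\<in>S. f x r * g x c)"
    by (rule eq_matI) (use insert in auto)
  have "vec_space.rank N (mat N M (\<lambda>(r,c). f x r * g x c) + mat N M (\<lambda>(r,c). \<Sum>x\<in>S. f x r * g x c) :: 'a mat)
     \<le> vec_space.rank N (mat N M (\<lambda>(r,c). f x r * g x c) :: 'a mat) + vec_space.rank N (mat N M (\<lambda>(r,c). \<Sum>x\<in>S. f x r * g x c) :: 'a mat)"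
    by (rule vec_space.rank_subadditive) auto
  moreover have "vec_space.rank N (mat N M (\<lambda>(r,c). f x r * g x c) :: 'a mat) \<le> 1"
    by (rule vec_space.rank_le_1_product_entries[where f="f x" and g="g x"]) auto
  ultimately show ?case using e insert by simp
qed

theorem mainTheorem11:
  fixes n k :: nat
  assumes "1 \<le> k" and "k \<le> n"
  shows "rigidity_rc (disj_mat n :: 'a::field mat) (2 * binom_lt n k)
           \<le> binom_le (n - k) (int n - 2 * int k)"
proof -
  define N where "N = (2::nat)^n"
  define A where "A = (disj_mat n :: 'a mat)"
  define L where "L = {x. x < N \<and> pc n x < k}"
  define bd where "bd = binom_le (n - k) (int n - 2 * int k)"
  have fL: "finite L" unfolding L_def by auto
  have A: "A \<in> carrier_mat N N" unfolding A_def N_def disj_mat_def by auto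
  have Aent: "\<And>r c. r < N \<Longrightarrow> c < N \<Longrightarrow> A $$ (r,c) = (if \<not> (\<exists>l<n. bit r l \<and> bit c l) then 1 else 0)"
    unfolding A_def N_def disj_mat_def by auto
  define B where "B = (mat N N (\<lambda>(r,c). if k \<le> pc n r \<and> k \<le> pc n c then - A$$(r,c) else 0) :: 'a mat)"
  define M1 where "M1 = (mat N N (\<lambda>(r,c). \<Sum>x\<in>L. (\<lambda>x r. if r = x then 1 else 0) x r * (\<lambda>x c. A$$(x,c)) x c) :: 'a mat)"
  define M2 where "M2 = (mat N N (\<lambda>(r,c). \<Sum>x\<in>L. (\<lambda>x r. if k \<le> pc n r then A$$(r,x) else 0) x r * (\<lambda>x c. if c = x then 1 else 0) x c) :: 'a mat)"
  have B: "B \<in> carrier_mat N N" unfolding B_def by auto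
  have sum_eq: "A + B = M1 + M2"
  proof (rule eq_matI)
    fix r c assume "r < dim_row (M1 + M2)" "c < dim_col (M1 + M2)"
    then have rc: "r < N" "c < N" unfolding M1_def M2_def by auto
    have m1: "M1 $$ (r,c) = (if r \<in> L then A$$(r,c) else 0)"
      using rc fL unfolding M1_def by (simp add: if_distrib[where f="\<lambda>a. a * _"] cong: if_cong)
    have m2: "M2 $$ (r,c) = (if c \<in> L \<and> k \<le> pc n r then A$$(r,c) else 0)"
      using rc fL unfolding M2_def by (simp add: if_distrib[where f="\<lambda>a. _ * a"] cong: if_cong)
    show "(A + B) $$ (r,c) = (M1 + M2) $$ (r,c)"
      using rc A B m1 m2 unfolding B_def L_def M1_def M2_def by auto
  qed (use A B in \<open>auto simp: M1_def M2_def\<close>)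
  have "mrank (A + B) = vec_space.rank N (M1 + M2)"
    unfolding mrank_def sum_eq by (simp add: M2_def)
  also have "\<dots> \<le> vec_space.rank N M1 + vec_space.rank N M2"
    by (rule vec_space.rank_subadditive) (auto simp: M1_def M2_def)
  also have "\<dots> \<le> card L + card L"
    unfolding M1_def M2_def
    by (intro add_mono rank_sum1[OF fL, of N N "\<lambda>x r. if r = x then 1 else 0" "\<lambda>x c. A$$(x,c)", simplified]
        rank_sum1[OF fL, of N N "\<lambda>x r. if k \<le> pc n r then A$$(r,x) else 0" "\<lambda>x c. if c = x then 1 else 0", simplified])
  also have "\<dots> \<le> 2 * binom_lt n k"
    using count_low[of n k] unfolding L_def N_def by simp
  finally have rk: "mrank (A + B) \<le> 2 * binom_lt n k" .
  have Bne: "\<And>r c. r < N \<Longrightarrow> c < N \<Longrightarrow> B $$ (r,c) \<noteq> 0 \<Longrightarrow>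
      k \<le> pc n r \<and> k \<le> pc n c \<and> \<not> (\<exists>l<n. bit r l \<and> bit c l)"
    unfolding B_def using Aent by (auto split: if_splits)
  have r: "nnz_r B \<le> bd"
    unfolding nnz_r_def
  proof (subst Max_le_iff, simp, simp, intro ballI)
    fix a assume "a \<in> insert 0 ((\<lambda>i. card {j. j < dim_col B \<and> B $$ (i, j) \<noteq> 0}) ` {..<dim_row B})"
    then consider "a = 0" | i where "i < N" "a = card {j. j < N \<and> B $$ (i, j) \<noteq> 0}"
      using B by auto
    then show "a \<le> bd"
    proof cases
      case 2
      show ?thesis
      proof (cases "k \<le> pc n i")
        case True
        have "a \<le> card {c. c < 2^n \<and> k \<le> pc n c \<and> \<not> (\<exists>l<n. bit i l \<and> bit c l)}"
          unfolding 2 by (rule card_mono) (use Bne 2 in \<open>auto simp: N_def\<close>)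
        then show ?thesis using count_high[OF True assms(2)] unfolding bd_def by linarith
      next
        case False
        then have "\<forall>j<N. B $$ (i, j) = 0" using Bne 2 by blast
        then have "{j. j < N \<and> B $$ (i, j) \<noteq> 0} = {}" by auto
        then show ?thesis using 2 by (metis card.empty le0)
      qed
    qed simp
  qed
  have c: "nnz_c B \<le> bd"
    unfolding nnz_c_def
  proof (subst Max_le_iff, simp, simp, intro ballI)
    fix a assume "a \<in> insert 0 ((\<lambda>j. card {i. i < dim_row B \<and> B $$ (i, j) \<noteq> 0}) ` {..<dim_col B})"
    then consider "a = 0" | j where "j < N" "a = card {i. i < N \<and> B $$ (i, j) \<noteq> 0}"
      using B by auto
    then show "a \<le> bd"
    proof cases
      case 2
      show ?thesis
      proof (cases "k \<le> pc n j")
        case True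
        have "a \<le> card {c. c < 2^n \<and> k \<le> pc n c \<and> \<not> (\<exists>l<n. bit j l \<and> bit c l)}"
          unfolding 2 by (rule card_mono) (use Bne 2 in \<open>auto simp: N_def\<close>)
        then show ?thesis using count_high[OF True assms(2)] unfolding bd_def by linarith
      next
        case False
        then have "\<forall>i<N. B $$ (i, j) = 0" using Bne 2 by blast
        then have "{i. i < N \<and> B $$ (i, j) \<noteq> 0} = {}" by auto
        then show ?thesis using 2 by (metis card.empty le0)
      qed
    qed simp
  qed
  have mem: "max (nnz_r B) (nnz_c B) \<in> {max (nnz_r B) (nnz_c B) | B.
      B \<in> carrier_mat (dim_row A) (dim_col A) \<and> mrank (A + B) \<le> 2 * binom_lt n k}"
    using B A rk by auto
  have "rigidity_rc A (2 * binom_lt n k) \<le> max (nnz_r B) (nnz_c B)"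
    unfolding rigidity_rc_def by (rule cInf_lower[OF mem]) simp
  also have "\<dots> \<le> bd" using r c by simp
  finally show ?thesis unfolding A_def bd_def .
qed

end
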